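(* There exist positive integers $m_0,t,L,q_0$, depending only on $k$, such that for every $(m_0,t,L,q_0)$-pseudo-random weight $\nu=(\nu_N)$ there is a function $N\mapsto\varepsilon(N)\ge0$ on primes with $\varepsilon(N)\to0$, such that for every prime $N$ and every $f:\mathbb{Z}_N\to\mathbb{R}$ with $|f(x)|\le1+\nu_N(x)$ for all $x$, one has $\max_{x\in\mathbb{Z}_N}|\mathcal Df(x)|\le2^{2^k-1}+\varepsilon(N)$.
   Context: Let $k\ge 2$ be a fixed integer. For a prime $N$, $\mathbb{Z}_N=\mathbb{Z}/N\mathbb{Z}$. For a finite set $A$ and $g:A\to\mathbb{R}$, $\mathbb{E}(g\mid A)=\frac{1}{|A|}\sum_{a\in A}g(a)$. For $\boldsymbol\omega\in\{0,1\}^k$ and $\mathbf t\in\mathbb{Z}_N^k$, $\boldsymbol\omega\cdot\mathbf t=\sum_i\omega_it_i$; $\mathbf 0=(0,\dots,0)$. The dual function of $f$ is $\mathcal Df(x)=\mathbb{E}\bigl(\prod_{\boldsymbol\omega\in\{0,1\}^k,\ \boldsymbol\omega\ne\mathbf 0}f(x+\boldsymbol\omega\cdot\mathbf t)\mid\mathbf t\in\mathbb{Z}_N^k\bigr)$. Let $m_0,t,L,q_0$ be positive integers. An $(m_0,t,L,q_0)$-pseudo-random weight is a family $\nu=(\nu_N)_{N\text{ prime}}$ of functions $\nu_N:\mathbb{Z}_N\to[0,\infty)$ satisfying: (Linear forms condition) $\sup\bigl|\mathbb{E}\bigl(\prod_{i=1}^m\nu_N(\psi_i(\mathbf{x}))\mid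 \mathbf{x}\in\mathbb{Z}_N^t\bigr)-1\bigr|\to 0$ as $N\to\infty$, where the supremum is over all $m\le m_0$ and all maps $\psi_1,\dots,\psi_m:\mathbb{Z}_N^t\to\mathbb{Z}_N$ of the form $\psi_i(\mathbf{x})=b_i+\sum_{j=1}^tL_{i,j}x_j$ with $b_i\in\mathbb{Z}$ arbitrary, $L_{i,j}\in\mathbb{Z}$, $|L_{i,j}|\le L$, each vector $(L_{i,j})_{1\le j\le t}\in\mathbb{Z}^t$ nonzero, and no two of these vectors collinear; (Correlation condition) there exist functions $\tau_N:\mathbb{Z}_N\to[0,\infty)$ with $\sup_N\mathbb{E}(\tau_N^p\mid\mathbb{Z}_N)<\infty$ for every integer $p\ge1$, such that for every prime $N$, every integer $q$ with $2\le q\le q_0$ and all $h_1,\dots,h_q\in\mathbb{Z}_N$ (not necessarily distinct), $\mathbb{E}\bigl(\nu_N(x+h_1)\cdots\nu_N(x+h_q)\mid x\in\mathbb{Z}_N\bigr)\le\sum_{1\le i<j\le q}\tau_N(h_i-h_j)$. *)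

theory Defs
  imports "HOL-Analysis.Analysis" "HOL-Computational_Algebra.Primes"
begin

text \<open>Z_N is represented by {0..<N} (natural numbers) with arithmetic mod N.
  A vector omega in {0,1}^k is represented by its support S \<subseteq> {0..<k};
  omega \<noteq> 0 iff S \<noteq> {}, and omega . t = sum of t i over i in S.\<close>

definition ZNvec :: "nat \<Rightarrow> nat \<Rightarrow> (nat \<Rightarrow> nat) set" where
  "ZNvec N k = PiE {0..<k} (\<lambda>_. {0..<N})"

definition dual_fun :: "nat \<Rightarrow> nat \<Rightarrow> (nat \<Rightarrow> real) \<Rightarrow> nat \<Rightarrow> real" where
  "dual_fun k N f x =
     (\<Sum>t\<in>ZNvec N k. \<Prod>S\<in>Pow {0..<k} - {{}}. f ((x + (\<Sum>i\<in>S. t i)) mod N))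
       / real N ^ k"

definition collinear_vec :: "nat \<Rightarrow> (nat \<Rightarrow> int) \<Rightarrow> (nat \<Rightarrow> int) \<Rightarrow> bool" where
  "collinear_vec t u v \<longleftrightarrow>
     (\<exists>a b :: int. (a \<noteq> 0 \<or> b \<noteq> 0) \<and> (\<forall>j<t. a * u j = b * v j))"

definition lin_form :: "nat \<Rightarrow> nat \<Rightarrow> int \<Rightarrow> (nat \<Rightarrow> int) \<Rightarrow> (nat \<Rightarrow> nat) \<Rightarrow> nat" where
  "lin_form N t b Lm x = nat ((b + (\<Sum>j<t. Lm j * int (x j))) mod int N)"

definition linear_forms_condition ::
  "nat \<Rightarrow> nat \<Rightarrow> nat \<Rightarrow> (nat \<Rightarrow> nat \<Rightarrow> real) \<Rightarrow> bool" where
  "linear_forms_condition m0 t L \<nu> \<longleftrightarrow>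
     (\<forall>e>0. \<exists>N0. \<forall>N. prime N \<and> N \<ge> N0 \<longrightarrow>
        (\<forall>m (b :: nat \<Rightarrow> int) (Lm :: nat \<Rightarrow> nat \<Rightarrow> int).
           m \<le> m0 \<and>
           (\<forall>i<m. \<forall>j<t. \<bar>Lm i j\<bar> \<le> int L) \<and>
           (\<forall>i<m. \<exists>j<t. Lm i j \<noteq> 0) \<and>
           (\<forall>i<m. \<forall>i'<m. i \<noteq> i' \<longrightarrow> \<not> collinear_vec t (Lm i) (Lm i'))
           \<longrightarrow>
           \<bar>(\<Sum>x\<in>ZNvec N t. \<Prod>i<m. \<nu> N (lin_form N t (b i) (Lm i) x)) / real N ^ t - 1\<bar>
             \<le> e))"

definition correlation_condition ::
  "nat \<Rightarrow> (nat \<Rightarrow> nat \<Rightarrow> real) \<Rightarrow> bool" where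
  "correlation_condition q0 \<nu> \<longleftrightarrow>
     (\<exists>\<tau> :: nat \<Rightarrow> nat \<Rightarrow> real.
        (\<forall>N x. prime N \<and> x < N \<longrightarrow> \<tau> N x \<ge> 0) \<and>
        (\<forall>p::nat. p \<ge> 1 \<longrightarrow> (\<exists>C. \<forall>N. prime N \<longrightarrow>
            (\<Sum>x<N. \<tau> N x ^ p) / real N \<le> C)) \<and>
        (\<forall>N q (h :: nat \<Rightarrow> nat). prime N \<and> 2 \<le> q \<and> q \<le> q0 \<and> (\<forall>i<q. h i < N) \<longrightarrow>
            (\<Sum>x<N. \<Prod>i<q. \<nu> N ((x + h i) mod N)) / real N
              \<le> (\<Sum>(i, j)\<in>{(i, j). i < j \<and> j < q}.
                    \<tau> N (nat ((int (h i) - int (h j)) mod int N)))))"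

definition pseudo_random_weight ::
  "nat \<Rightarrow> nat \<Rightarrow> nat \<Rightarrow> nat \<Rightarrow> (nat \<Rightarrow> nat \<Rightarrow> real) \<Rightarrow> bool" where
  "pseudo_random_weight m0 t L q0 \<nu> \<longleftrightarrow>
     (\<forall>N x. prime N \<and> x < N \<longrightarrow> \<nu> N x \<ge> 0) \<and>
     linear_forms_condition m0 t L \<nu> \<and>
     correlation_condition q0 \<nu>"

end

theory Submission
  imports Defs
begin

definition avgA :: "(nat \<Rightarrow> nat \<Rightarrow> real) \<Rightarrow> nat \<Rightarrow> nat \<Rightarrow> nat \<Rightarrow> nat set set \<Rightarrow> real" where
  "avgA \<nu> k N x A = (\<Sum>t\<in>ZNvec N k. \<Prod>S\<in>A. \<nu> N ((x + (\<Sum>i\<in>S. t i)) mod N)) / real N ^ k"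

lemma dual_bound:
  assumes N: "N > 0" and fb: "\<forall>y<N. \<bar>f y\<bar> \<le> 1 + \<nu> N y"
  shows "\<bar>dual_fun k N f x\<bar> \<le> (\<Sum>A\<in>Pow (Pow {0..<k} - {{}}). avgA \<nu> k N x A)"
proof -
  let ?P = "Pow {0..<k} - {{}}"
  have fin: "finite ?P" by simp
  have finZ: "finite (ZNvec N k)" unfolding ZNvec_def by (simp add: finite_PiE)
  have "\<bar>dual_fun k N f x\<bar> = \<bar>\<Sum>t\<in>ZNvec N k. \<Prod>S\<in>?P. f ((x + (\<Sum>i\<in>S. t i)) mod N)\<bar> / real N ^ k"
    unfolding dual_fun_def by simp
  also have "\<dots> \<le> (\<Sum>t\<in>ZNvec N k. \<Prod>S\<in>?P. (1 + \<nu> N ((x + (\<Sum>i\<in>S. t i)) mod N))) / real N ^ k"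
  proof (rule divide_right_mono)
    show "\<bar>\<Sum>t\<in>ZNvec N k. \<Prod>S\<in>?P. f ((x + (\<Sum>i\<in>S. t i)) mod N)\<bar>
        \<le> (\<Sum>t\<in>ZNvec N k. \<Prod>S\<in>?P. (1 + \<nu> N ((x + (\<Sum>i\<in>S. t i)) mod N)))"
    proof (rule order_trans[OF sum_abs], rule sum_mono)
      fix t
      have "\<bar>\<Prod>S\<in>?P. f ((x + (\<Sum>i\<in>S. t i)) mod N)\<bar> = (\<Prod>S\<in>?P. \<bar>f ((x + (\<Sum>i\<in>S. t i)) mod N)\<bar>)"
        by (rule abs_prod)
      also have "\<dots> \<le> (\<Prod>S\<in>?P. (1 + \<nu> N ((x + (\<Sum>i\<in>S. t i)) mod N)))"
        by (rule prod_mono) (use fb N in auto)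
      finally show "\<bar>\<Prod>S\<in>?P. f ((x + (\<Sum>i\<in>S. t i)) mod N)\<bar> \<le> (\<Prod>S\<in>?P. (1 + \<nu> N ((x + (\<Sum>i\<in>S. t i)) mod N)))" .
    qed
  qed simp
  also have "\<dots> = (\<Sum>t\<in>ZNvec N k. \<Sum>A\<in>Pow ?P. \<Prod>S\<in>A. \<nu> N ((x + (\<Sum>i\<in>S. t i)) mod N)) / real N ^ k"
  proof -
    have "\<And>t. (\<Prod>S\<in>?P. (1 + \<nu> N ((x + (\<Sum>i\<in>S. t i)) mod N)))
          = (\<Sum>A\<in>Pow ?P. \<Prod>S\<in>A. \<nu> N ((x + (\<Sum>i\<in>S. t i)) mod N))"
      using prod_add[OF fin, of "\<lambda>S. \<nu> N ((x + (\<Sum>i\<in>S. t i)) mod N)" "\<lambda>_. 1" for t] by (simp add: add.commute)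
    then show ?thesis by simp
  qed
  also have "\<dots> = (\<Sum>A\<in>Pow ?P. avgA \<nu> k N x A)"
    unfolding avgA_def by (simp add: sum.swap[of _ "ZNvec N k"] sum_divide_distrib)
  finally show ?thesis .
qed

lemma lin_avg:
  assumes lf: "linear_forms_condition (2 ^ k - 1) k 1 \<nu>" and e: "e > 0"
  shows "\<exists>N0. \<forall>N. prime N \<and> N \<ge> N0 \<longrightarrow>
     (\<forall>x A. A \<in> Pow (Pow {0..<k} - {{}}) \<longrightarrow> \<bar>avgA \<nu> k N x A - 1\<bar> \<le> e)"
proof -
  obtain N0 where N0: "\<forall>N. prime N \<and> N \<ge> N0 \<longrightarrow>
        (\<forall>m (b :: nat \<Rightarrow> int) (Lm :: nat \<Rightarrow> nat \<Rightarrow> int).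
           m \<le> 2 ^ k - 1 \<and>
           (\<forall>i<m. \<forall>j<k. \<bar>Lm i j\<bar> \<le> int 1) \<and>
           (\<forall>i<m. \<exists>j<k. Lm i j \<noteq> 0) \<and>
           (\<forall>i<m. \<forall>i'<m. i \<noteq> i' \<longrightarrow> \<not> collinear_vec k (Lm i) (Lm i'))
           \<longrightarrow>
           \<bar>(\<Sum>x\<in>ZNvec N k. \<Prod>i<m. \<nu> N (lin_form N k (b i) (Lm i) x)) / real N ^ k - 1\<bar>
             \<le> e)"
    using lf e unfolding linear_forms_condition_def by blast
  show ?thesis
  proof (intro exI allI impI)
    fix N x A
    assume NN: "prime N \<and> N0 \<le> N" and A: "A \<in> Pow (Pow {0..<k} - {{}})"
    have finA: "finite A" using A by (meson PowD finite_Diff finite_Pow_iff finite_atLeastLessThan finite_subset)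
    obtain g where g: "bij_betw g {0..<card A} A" using ex_bij_betw_nat_finite[OF finA] by blast
    define m where "m = card A"
    define Lm :: "nat \<Rightarrow> nat \<Rightarrow> int" where "Lm = (\<lambda>i j. if j \<in> g i then 1 else 0)"
    have gA: "\<And>i. i < m \<Longrightarrow> g i \<in> A" using g unfolding m_def bij_betw_def by auto
    have gsub: "\<And>i. i < m \<Longrightarrow> g i \<subseteq> {0..<k} \<and> g i \<noteq> {}" using gA A by auto
    have ginj: "\<And>i i'. i < m \<Longrightarrow> i' < m \<Longrightarrow> i \<noteq> i' \<Longrightarrow> g i \<noteq> g i'"
      using g unfolding m_def bij_betw_def inj_on_def by auto
    have mle: "m \<le> 2 ^ k - 1"
    proof -
      have "m \<le> card (Pow {0..<k} - {{}})" unfolding m_def using A by (intro card_mono) auto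
      also have "\<dots> = 2 ^ k - 1" by (simp add: card_Pow)
      finally show ?thesis .
    qed
    have c1: "\<forall>i<m. \<forall>j<k. \<bar>Lm i j\<bar> \<le> int 1" unfolding Lm_def by auto
    have c2: "\<forall>i<m. \<exists>j<k. Lm i j \<noteq> 0"
    proof (intro allI impI)
      fix i assume "i < m"
      then obtain j where "j \<in> g i" "j < k" using gsub by fastforce
      then show "\<exists>j<k. Lm i j \<noteq> 0" unfolding Lm_def by auto
    qed
    have c3: "\<forall>i<m. \<forall>i'<m. i \<noteq> i' \<longrightarrow> \<not> collinear_vec k (Lm i) (Lm i')"
    proof (intro allI impI notI)
      fix i i' assume i: "i < m" and i': "i' < m" and ne: "i \<noteq> i'" and col: "collinear_vec k (Lm i) (Lm i')"
      obtain a b :: int where ab: "a \<noteq> 0 \<or> b \<noteq> 0" and eq: "\<forall>j<k. a * Lm i j = b * Lm i' j"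
        using col unfolding collinear_vec_def by blast
      have d: "g i \<noteq> g i'" using ginj i i' ne by blast
      show False
      proof (cases "\<exists>j. j \<in> g i \<and> j \<notin> g i'")
        case True
        then obtain j where j: "j \<in> g i" "j \<notin> g i'" by blast
        have "j < k" using gsub[OF i] j by auto
        then have "a = 0" using eq j unfolding Lm_def by force
        then have b: "b \<noteq> 0" using ab by simp
        obtain j' where j': "j' \<in> g i'" using gsub[OF i'] by blast
        have "j' < k" using gsub[OF i'] j' by auto
        then show False using eq j' b \<open>a = 0\<close> unfolding Lm_def by force
      next
        case False
        then obtain j where j: "j \<in> g i'" "j \<notin> g i" using d by blast
        have "j < k" using gsub[OF i'] j by auto
        then have "b = 0" using eq j unfolding Lm_def by force
        then have b: "a \<noteq> 0" using ab by simp
        obtain j' where j': "j' \<in> g i" using gsub[OF i] by blast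
        have "j' < k" using gsub[OF i] j' by auto
        then show False using eq j' b \<open>b = 0\<close> unfolding Lm_def by force
      qed
    qed
    have main: "\<bar>(\<Sum>t\<in>ZNvec N k. \<Prod>i<m. \<nu> N (lin_form N k ((\<lambda>_. int x) i) (Lm i) t)) / real N ^ k - 1\<bar> \<le> e"
      by (rule N0[rule_format]) (use NN mle c1 c2 c3 in blast)+
    have eqt: "(\<Prod>i<m. \<nu> N (lin_form N k (int x) (Lm i) t)) = (\<Prod>S\<in>A. \<nu> N ((x + (\<Sum>i\<in>S. t i)) mod N))"
      for t
    proof -
      have "lin_form N k (int x) (Lm i) t = (x + (\<Sum>j\<in>g i. t j)) mod N" if i: "i < m" for i
      proof -
        have "(\<Sum>j<k. Lm i j * int (t j)) = (\<Sum>j\<in>g i. int (t j))"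
        proof -
          have "(\<Sum>j<k. Lm i j * int (t j)) = (\<Sum>j\<in>{..<k} \<inter> g i. int (t j))"
            unfolding Lm_def sum.inter_restrict[OF finite_lessThan] by (rule sum.cong) auto
          also have "{..<k} \<inter> g i = g i" using gsub[OF i] by auto
          finally show ?thesis .
        qed
        then show ?thesis unfolding lin_form_def
          by (metis nat_int of_nat_add of_nat_mod of_nat_sum)
      qed
      then have "(\<Prod>i<m. \<nu> N (lin_form N k (int x) (Lm i) t)) = (\<Prod>i\<in>{0..<card A}. \<nu> N ((x + (\<Sum>j\<in>g i. t j)) mod N))"
        unfolding m_def by (auto intro: prod.cong simp: atLeast0LessThan)
      also have "\<dots> = (\<Prod>S\<in>A. \<nu> N ((x + (\<Sum>i\<in>S. t i)) mod N))"
        by (rule prod.reindex_bij_betw[OF g])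
      finally show ?thesis .
    qed
    show "\<bar>avgA \<nu> k N x A - 1\<bar> \<le> e" using main unfolding avgA_def eqt by simp
  qed
qed

theorem lemma4p2:
  fixes k :: nat
  assumes "k \<ge> 2"
  shows "\<exists>m0 t L q0 :: nat. m0 > 0 \<and> t > 0 \<and> L > 0 \<and> q0 > 0 \<and>
    (\<forall>\<nu>. pseudo_random_weight m0 t L q0 \<nu> \<longrightarrow>
      (\<exists>\<epsilon> :: nat \<Rightarrow> real.
         (\<forall>N. prime N \<longrightarrow> \<epsilon> N \<ge> 0) \<and>
         (\<forall>e>0. \<exists>N0. \<forall>N. prime N \<and> N \<ge> N0 \<longrightarrow> \<epsilon> N < e) \<and>
         (\<forall>N (f :: nat \<Rightarrow> real). prime N \<longrightarrow> (\<forall>x<N. \<bar>f x\<bar> \<le> 1 + \<nu> N x) \<longrightarrow>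
            (\<forall>x<N. \<bar>dual_fun k N f x\<bar> \<le> 2 ^ (2 ^ k - 1) + \<epsilon> N))))"
proof -
  let ?P = "Pow {0..<k} - {{}}"
  have cardP: "card (Pow ?P) = 2 ^ (2 ^ k - 1)"
    by (simp add: card_Pow)
  show ?thesis
  proof (rule exI[of _ "2^k-1"], rule exI[of _ k], rule exI[of _ 1], rule exI[of _ 1], intro conjI allI impI)
    show "0 < (2::nat) ^ k - 1" using assms
      using one_less_power[of "2::nat" k] by simp
    show "0 < k" using assms by simp
    show "0 < (1::nat)" by simp
    show "0 < (1::nat)" by simp
  next
    fix \<nu> assume prw: "pseudo_random_weight (2 ^ k - 1) k 1 1 \<nu>"
    then have lf: "linear_forms_condition (2 ^ k - 1) k 1 \<nu>" unfolding pseudo_random_weight_def by blast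
    define E where "E = (\<lambda>N x. \<Sum>A\<in>Pow ?P. \<bar>avgA \<nu> k N x A - 1\<bar>)"
    define eps where "eps = (\<lambda>N. Max (E N ` {..<N}))"
    have Enn: "E N x \<ge> 0" for N x unfolding E_def by (intro sum_nonneg) auto
    have epsge: "E N x \<le> eps N" if "x < N" for N x
      unfolding eps_def using that by (intro Max_ge) auto
    show "\<exists>\<epsilon> :: nat \<Rightarrow> real.
         (\<forall>N. prime N \<longrightarrow> \<epsilon> N \<ge> 0) \<and>
         (\<forall>e>0. \<exists>N0. \<forall>N. prime N \<and> N \<ge> N0 \<longrightarrow> \<epsilon> N < e) \<and>
         (\<forall>N (f :: nat \<Rightarrow> real). prime N \<longrightarrow> (\<forall>x<N. \<bar>f x\<bar> \<le> 1 + \<nu> N x) \<longrightarrow>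
            (\<forall>x<N. \<bar>dual_fun k N f x\<bar> \<le> 2 ^ (2 ^ k - 1) + \<epsilon> N))"
    proof (intro exI[of _ eps] conjI allI impI)
      fix N :: nat assume "prime N"
      then have "0 < N" by (simp add: prime_gt_0_nat)
      then show "0 \<le> eps N" using epsge[of 0 N] Enn[of N 0] by linarith
    next
      fix e :: real assume e: "e > 0"
      define e' where "e' = e / (2 * 2 ^ (2 ^ k - 1))"
      have e': "e' > 0" unfolding e'_def using e by simp
      obtain N0 where N0: "\<forall>N. prime N \<and> N \<ge> N0 \<longrightarrow>
         (\<forall>x A. A \<in> Pow ?P \<longrightarrow> \<bar>avgA \<nu> k N x A - 1\<bar> \<le> e')"
        using lin_avg[OF lf e'] by blast
      show "\<exists>N0. \<forall>N. prime N \<and> N \<ge> N0 \<longrightarrow> eps N < e"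
      proof (intro exI allI impI)
        fix N assume NN: "prime N \<and> N0 \<le> N"
        then have "0 < N" by (simp add: prime_gt_0_nat)
        have "E N x \<le> e / 2" for x
        proof -
          have "E N x \<le> of_nat (card (Pow ?P)) * e'"
            unfolding E_def using N0 NN by (intro sum_bounded_above) auto
          also have "\<dots> = e / 2" unfolding cardP e'_def by simp
          finally show ?thesis .
        qed
        then have "eps N \<le> e / 2" unfolding eps_def using \<open>0 < N\<close>
          by (intro Max.boundedI) auto
        then show "eps N < e" using e by linarith
      qed
    next
      fix N :: nat and f :: "nat \<Rightarrow> real" and x :: nat
      assume "prime N" and fb: "\<forall>x<N. \<bar>f x\<bar> \<le> 1 + \<nu> N x" and x: "x < N"
      then have N: "0 < N" by (simp add: prime_gt_0_nat)
      have "\<bar>dual_fun k N f x\<bar> \<le> (\<Sum>A\<in>Pow ?P. avgA \<nu> k N x A)"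
        using dual_bound[of N f \<nu> k x] N fb by blast
      also have "\<dots> \<le> (\<Sum>A\<in>Pow ?P. 1 + \<bar>avgA \<nu> k N x A - 1\<bar>)"
        by (intro sum_mono) linarith
      also have "\<dots> = of_nat (card (Pow ?P)) + E N x"
        unfolding E_def by (simp add: sum.distrib)
      also have "\<dots> \<le> 2 ^ (2 ^ k - 1) + eps N"
        using epsge[OF x] unfolding cardP by simp
      finally show "\<bar>dual_fun k N f x\<bar> \<le> 2 ^ (2 ^ k - 1) + eps N" .
    qed
  qed
qed

end
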